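(* Let $n\ge3$, let $z^\diamond\in\mathbb{R}^n$, and let $\mathcal{M}\subseteq\{1,\dots,n\}$ be a sample set that is a union of twin samples, contains $1$ and $n$, and contains a twin sample in every linear segment of $z^\diamond$. Let $A=\mathbf{I}_{\mathcal{M}}$ and $y=Az^\diamond$ (noiseless). Consider the following algorithm: (1) solve $\min_z\|Dz\|_1$ subject to $Az=y$, obtaining an optimal value $f^\star$ and an optimal solution $z^\star$; (2) define $s\in\{-1,0,+1\}^n$ by setting, for every pair of consecutive twin samples $(i-1,i)$ and $(j,j+1)$ in $\mathcal{M}$ and every $k\in\{i+1,\dots,j-1\}$, $s_k=\mathrm{sign}\big((z^\star_{j+1}-z^\star_j)-(z^\star_i-z^\star_{i-1})\big)$, and $s_k=0$ for all other $k$; (3) return $\arg\min_z s^{\mathsf{T}}z$ subject to $Az=y$ and $\|Dz\|_1\le f^\star$. Then the algorithm returns $z^\diamond$, i.e., it recovers $z^\diamond$ exactly.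
   Context: $D\in\mathbb{R}^{(n-2)\times n}$ is the second-order difference operator, $(Dz)_k=z_k-2z_{k+1}+z_{k+2}$; $\mathbf{I}_{\mathcal{M}}$ consists of the rows of the identity indexed by $\mathcal{M}$. A twin sample is a pair of consecutive indices $\{i,i+1\}\subseteq\mathcal{M}$. The corners of $z^\diamond$ are the indices $i\in\{2,\dots,n-1\}$ with $z^\diamond_{i-1}-2z^\diamond_i+z^\diamond_{i+1}\ne0$; if $c_1<\dots<c_p$ are the corners, $c_0=1$, $c_{p+1}=n$, the linear segments are the index sets $\{c_t,\dots,c_{t+1}\}$, $t=0,\dots,p$; a twin sample lies in a segment if both its indices belong to it. $\mathrm{sign}(0)=0$. *)

theory Defs
  imports Main "HOL.Real"
begin

text \<open>Vectors in R^n are functions nat => real; only the entries 1..n matter.\<close>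

definition D_l1 :: "nat \<Rightarrow> (nat \<Rightarrow> real) \<Rightarrow> real" where
  "D_l1 n z = (\<Sum>k=1..n-2. \<bar>z k - 2 * z (k+1) + z (k+2)\<bar>)"

definition meas_eq :: "nat set \<Rightarrow> (nat \<Rightarrow> real) \<Rightarrow> (nat \<Rightarrow> real) \<Rightarrow> bool" where
  "meas_eq M z y \<longleftrightarrow> (\<forall>i\<in>M. z i = y i)"

definition twin :: "nat set \<Rightarrow> nat \<Rightarrow> bool" where
  "twin M i \<longleftrightarrow> i \<in> M \<and> i + 1 \<in> M"

definition union_of_twins :: "nat set \<Rightarrow> bool" where
  "union_of_twins M \<longleftrightarrow> M = (\<Union>i\<in>{i. twin M i}. {i, i+1})"

definition corners :: "nat \<Rightarrow> (nat \<Rightarrow> real) \<Rightarrow> nat set" where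
  "corners n z = {i \<in> {2..n-1}. z (i-1) - 2 * z i + z (i+1) \<noteq> 0}"

definition linear_segment :: "nat \<Rightarrow> (nat \<Rightarrow> real) \<Rightarrow> nat set \<Rightarrow> bool" where
  "linear_segment n z S \<longleftrightarrow> (\<exists>a b. S = {a..b} \<and> a < b \<and>
      a \<in> corners n z \<union> {1, n} \<and> b \<in> corners n z \<union> {1, n} \<and>
      (\<forall>c \<in> corners n z \<union> {1, n}. \<not> (a < c \<and> c < b)))"

definition gap_pair :: "nat set \<Rightarrow> nat \<Rightarrow> nat \<Rightarrow> nat \<Rightarrow> bool" where
  "gap_pair M k i j \<longleftrightarrow> i \<ge> 2 \<and> twin M (i-1) \<and> twin M j \<and> i < j \<and>
      (\<forall>m. i < m \<and> m < j \<longrightarrow> m \<notin> M) \<and> i < k \<and> k < j"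

definition sign_vec :: "nat set \<Rightarrow> (nat \<Rightarrow> real) \<Rightarrow> nat \<Rightarrow> real" where
  "sign_vec M zs k = (if \<exists>i j. gap_pair M k i j then
      (let (i, j) = (SOME (i, j). gap_pair M k i j) in
        sgn ((zs (j+1) - zs j) - (zs i - zs (i-1))))
     else 0)"

definition inner_n :: "nat \<Rightarrow> (nat \<Rightarrow> real) \<Rightarrow> (nat \<Rightarrow> real) \<Rightarrow> real" where
  "inner_n n s z = (\<Sum>k=1..n. s k * z k)"

end

theory Submission
  imports Defs
begin

definition gp :: "nat set \<Rightarrow> nat \<Rightarrow> nat \<Rightarrow> bool" where
 "gp M i j \<longleftrightarrow> 2 \<le> i \<and> i-1 \<in> M \<and> i \<in> M \<and> j \<in> M \<and> j+1 \<in> M \<and> i+1 < j \<and> (\<forall>m. i < m \<and> m < j \<longrightarrow> m \<notin> M)"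

definition ee :: "(nat \<Rightarrow> real) \<Rightarrow> nat \<Rightarrow> real" where
 "ee z t = z t - 2 * z (t+1) + z (t+2)"

lemma gp_unique: assumes "gp M i j" "gp M i' j'" "i \<le> p" "p \<le> j" "i' \<le> p" "p \<le> j'"
  shows "i = i' \<and> j = j'"
  using assms unfolding gp_def by (metis add_lessD1 less_add_one linorder_neqE_nat nat_le_iff_add)

lemma slope_mono:
  fixes d :: "nat \<Rightarrow> real"
  assumes "a \<le> b" "\<forall>q. a < q \<and> q \<le> b \<longrightarrow> d (q-1) \<le> d q"
  shows "d a \<le> d b"
  using assms
proof (induction b)
  case 0 then show ?case by simp
next
  case (Suc b)
  show ?case
  proof (cases "a = Suc b")
    case True then show ?thesis by simp
  next
    case False
    then have "a \<le> b" using Suc by simp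
    then have "d a \<le> d b" using Suc by simp
    moreover have "d b \<le> d (Suc b)" using Suc.prems(2) \<open>a \<le> b\<close> by (metis diff_Suc_1 le_imp_less_Suc order_refl)
    ultimately show ?thesis by simp
  qed
qed

lemma slope_const:
  fixes d :: "nat \<Rightarrow> real"
  assumes "a \<le> b" "\<forall>q. a < q \<and> q \<le> b \<longrightarrow> d (q-1) = d q"
  shows "d a = d b"
proof -
  have "d a \<le> d b" using slope_mono[of a b d] assms by simp
  moreover have "- d a \<le> - d b" using slope_mono[of a b "\<lambda>x. - d x"] assms by simp
  ultimately show ?thesis by simp
qed

lemma diff_sum: "k \<le> j \<Longrightarrow> (z::nat\<Rightarrow>real) j - z k = (\<Sum>m\<in>{k..<j}. z (m+1) - z m)"
  using sum_Suc_diff'[of k j z] by simp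

lemma tele:
  fixes w \<sigma> :: "nat \<Rightarrow> real"
  assumes "w 2 = w 1" "\<forall>t. 1 \<le> t \<and> t \<le> N \<and> w (t+1) \<noteq> w t \<longrightarrow> \<sigma> (t-1) = \<sigma> t"
  shows "(\<Sum>t=1..N. \<sigma> t * ee w t) = \<sigma> N * (w (N+2) - w (N+1))"
  using assms(2)
proof (induction N)
  case 0 then show ?case using assms(1) by (simp add: numeral_2_eq_2)
next
  case (Suc N)
  have IH: "(\<Sum>t=1..N. \<sigma> t * ee w t) = \<sigma> N * (w (N+2) - w (N+1))" using Suc by auto
  have h: "w (N+2) \<noteq> w (N+1) \<Longrightarrow> \<sigma> N = \<sigma> (Suc N)" using Suc.prems
    by (metis Suc_eq_plus1 add_2_eq_Suc' diff_Suc_1 le_add2 order_refl)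
  have "(\<Sum>t=1..Suc N. \<sigma> t * ee w t) = \<sigma> N * (w (N+2) - w (N+1)) + \<sigma> (Suc N) * ee w (Suc N)"
    using IH by simp
  also have "\<dots> = \<sigma> (Suc N) * (w (Suc N + 2) - w (Suc N + 1))"
  proof (cases "w (N+2) = w (N+1)")
    case True then show ?thesis unfolding ee_def by (simp add: algebra_simps)
  next
    case False then show ?thesis using h unfolding ee_def by (simp add: algebra_simps)
  qed
  finally show ?case .
qed


lemma ee_d: "1 \<le> q \<Longrightarrow> ee z (q-1) = (z (q+1) - z q) - (z q - z (q-1))"
  by (cases q) (auto simp: ee_def)

lemma lin_fwd:
  assumes "\<forall>q. i \<le> q \<and> q < k \<longrightarrow> ee z (q-1) = 0" "1 \<le> i" "i \<le> k"
  shows "z k = z i + (z i - z (i-1)) * real (k - i)"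
proof -
  define d where "d m = z (m+1) - z m" for m
  have dm: "d m = d (i-1)" if "i \<le> m" "m < k" for m
  proof -
    have "d (i-1) = d m"
    proof (rule slope_const)
      show "i - 1 \<le> m" using that by simp
      show "\<forall>q. i - 1 < q \<and> q \<le> m \<longrightarrow> d (q - 1) = d q"
      proof (intro allI impI)
        fix q assume "i - 1 < q \<and> q \<le> m"
        then have "ee z (q-1) = 0" "1 \<le> q" using assms that by auto
        then show "d (q-1) = d q" using ee_d[of q z] unfolding d_def by simp
      qed
    qed
    then show ?thesis by simp
  qed
  have "z k - z i = (\<Sum>m\<in>{i..<k}. d m)" using diff_sum[OF assms(3)] unfolding d_def by simp
  also have "\<dots> = (\<Sum>m\<in>{i..<k}. d (i-1))" using dm by (intro sum.cong) auto
  also have "\<dots> = real (k - i) * d (i-1)" by simp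
  finally show ?thesis unfolding d_def using assms(2) by (simp add: algebra_simps)
qed

lemma lin_bwd:
  assumes "\<forall>q. k < q \<and> q \<le> j \<longrightarrow> ee z (q-1) = 0" "k \<le> j"
  shows "z k = z j - (z (j+1) - z j) * real (j - k)"
proof -
  define d where "d m = z (m+1) - z m" for m
  have dm: "d m = d j" if "k \<le> m" "m < j" for m
  proof (rule slope_const)
    show "m \<le> j" using that by simp
    show "\<forall>q. m < q \<and> q \<le> j \<longrightarrow> d (q - 1) = d q"
    proof (intro allI impI)
      fix q assume "m < q \<and> q \<le> j"
      then have "ee z (q-1) = 0" "1 \<le> q" using assms that by auto
      then show "d (q-1) = d q" using ee_d[of q z] unfolding d_def by simp
    qed
  qed
  have "z j - z k = (\<Sum>m\<in>{k..<j}. d m)" using diff_sum[OF assms(2)] unfolding d_def by simp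
  also have "\<dots> = (\<Sum>m\<in>{k..<j}. d j)" using dm by (intro sum.cong) auto
  also have "\<dots> = real (j - k) * d j" by simp
  finally show ?thesis unfolding d_def by (simp add: algebra_simps)
qed

lemma conv_lb:
  assumes "\<forall>q. i \<le> q \<and> q \<le> j \<longrightarrow> ee z (q-1) \<ge> 0" "1 \<le> i" "i \<le> k" "k \<le> j"
  shows "z k \<ge> z i + (z i - z (i-1)) * real (k - i) \<and> z k \<ge> z j - (z (j+1) - z j) * real (j - k)"
proof -
  define d where "d m = z (m+1) - z m" for m
  have mono: "d a \<le> d b" if "i - 1 \<le> a" "a \<le> b" "b \<le> j" for a b
  proof (rule slope_mono)
    show "a \<le> b" by fact
    show "\<forall>q. a < q \<and> q \<le> b \<longrightarrow> d (q - 1) \<le> d q"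
    proof (intro allI impI)
      fix q assume "a < q \<and> q \<le> b"
      then have "ee z (q-1) \<ge> 0" "1 \<le> q" using assms that by auto
      then show "d (q-1) \<le> d q" using ee_d[of q z] unfolding d_def by simp
    qed
  qed
  have "z k - z i = (\<Sum>m\<in>{i..<k}. d m)" using diff_sum[OF assms(3)] unfolding d_def by simp
  also have "\<dots> \<ge> (\<Sum>m\<in>{i..<k}. d (i-1))" using mono assms by (intro sum_mono) auto
  finally have 1: "z k - z i \<ge> real (k - i) * d (i-1)" by simp
  have "z j - z k = (\<Sum>m\<in>{k..<j}. d m)" using diff_sum[OF assms(4)] unfolding d_def by simp
  also have "\<dots> \<le> (\<Sum>m\<in>{k..<j}. d j)" using mono assms by (intro sum_mono) auto
  finally have 2: "z j - z k \<le> real (j - k) * d j" by simp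
  show ?thesis using 1 2 assms(2) unfolding d_def by (simp add: algebra_simps)
qed

definition egap :: "(nat \<Rightarrow> real) \<Rightarrow> nat \<Rightarrow> nat \<Rightarrow> real" where
  "egap z i j = sgn ((z (j+1) - z j) - (z i - z (i-1)))"

definition sig :: "nat set \<Rightarrow> (nat \<Rightarrow> real) \<Rightarrow> nat \<Rightarrow> real" where
  "sig M z t = (if \<exists>i j. gp M i j \<and> i \<le> t+1 \<and> t+1 \<le> j then
     (let x = SOME x. gp M (fst x) (snd x) \<and> fst x \<le> t+1 \<and> t+1 \<le> snd x in egap z (fst x) (snd x))
     else sgn (ee z t))"

lemma sig_gap: assumes "gp M i j" "i \<le> t+1" "t+1 \<le> j" shows "sig M z t = egap z i j"
proof -
  let ?P = "\<lambda>x. gp M (fst x) (snd x) \<and> fst x \<le> t+1 \<and> t+1 \<le> snd x"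
  have "?P (i,j)" using assms by simp
  hence P: "?P (SOME x. ?P x)" by (rule someI)
  have "fst (SOME x. ?P x) = i \<and> snd (SOME x. ?P x) = j"
    using gp_unique[OF assms(1), of "fst (SOME x. ?P x)" "snd (SOME x. ?P x)" "t+1"] P assms by auto
  then show ?thesis unfolding sig_def using assms by (auto simp: Let_def)
qed

lemma sig_abs: "\<bar>sig M z t\<bar> \<le> 1"
  unfolding sig_def egap_def Let_def by (auto simp: sgn_if)

lemma gap_pair_gp: "gap_pair M k i j \<longleftrightarrow> gp M i j \<and> i < k \<and> k < j"
  unfolding gap_pair_def gp_def twin_def by auto


locale recov =
  fixes n :: nat and M :: "nat set" and zd :: "nat \<Rightarrow> real"
  assumes n3: "n \<ge> 3" and Msub: "M \<subseteq> {1..n}" and uni: "union_of_twins M"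
    and M1: "1 \<in> M" and Mn: "n \<in> M"
    and seg: "\<forall>S. linear_segment n zd S \<longrightarrow> (\<exists>i. twin M i \<and> {i, i+1} \<subseteq> S)"
begin

lemma twin_mem: assumes "m \<in> M" shows "m+1 \<in> M \<or> (m \<ge> 2 \<and> m-1 \<in> M)"
proof -
  from assms uni obtain i where i: "twin M i" "m = i \<or> m = i+1"
    unfolding union_of_twins_def by blast
  then have "i \<in> M" "i+1 \<in> M" unfolding twin_def by auto
  then have "i \<ge> 1" using Msub by auto
  then show ?thesis using i \<open>i \<in> M\<close> \<open>i+1 \<in> M\<close> by auto
qed

lemma M2: "2 \<in> M"
  using twin_mem[OF M1] by (simp add: numeral_2_eq_2)

lemma Mn1: "n - 1 \<in> M"
proof -
  have "n+1 \<notin> M" using Msub by auto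
  then show ?thesis using twin_mem[OF Mn] by simp
qed

lemma gp_bounds: "gp M i j \<Longrightarrow> 2 \<le> i \<and> j + 1 \<le> n"
  using Msub unfolding gp_def by auto

lemma cover: assumes "1 \<le> k" "k \<le> n" "k \<notin> M" shows "\<exists>i j. gp M i j \<and> i < k \<and> k < j"
proof -
  define A where "A = {m\<in>M. m < k}"
  define B where "B = {m\<in>M. k < m}"
  define i where "i = Max A"
  define j where "j = Min B"
  have finA: "finite A" unfolding A_def by simp
  have finB: "finite B" unfolding B_def using Msub by (auto intro: finite_subset)
  have "1 \<in> A" unfolding A_def using M1 assms by (cases "k = 1") auto
  then have neA: "A \<noteq> {}" by auto
  have "n \<in> B" unfolding B_def using Mn assms by (cases "k = n") auto
  then have neB: "B \<noteq> {}" by auto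
  have iA: "i \<in> M" "i < k" using Max_in[OF finA neA] unfolding i_def A_def by auto
  have imax: "m \<le> i" if "m \<in> M" "m < k" for m using Max_ge[OF finA] that unfolding i_def A_def by auto
  have jB: "j \<in> M" "k < j" using Min_in[OF finB neB] unfolding j_def B_def by auto
  have jmin: "j \<le> m" if "m \<in> M" "k < m" for m using Min_le[OF finB] that unfolding j_def B_def by auto
  have "i+1 \<notin> M"
  proof
    assume "i+1 \<in> M"
    show False
    proof (cases "i+1 < k")
      case True then show False using imax[OF \<open>i+1 \<in> M\<close>] by simp
    next
      case False then have "i+1 = k" using iA by simp
      then show False using assms \<open>i+1 \<in> M\<close> by simp
    qed
  qed
  then have i2: "i \<ge> 2" "i - 1 \<in> M" using twin_mem[OF iA(1)] by auto
  have "j-1 \<notin> M"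
  proof
    assume "j-1 \<in> M"
    show False
    proof (cases "k < j-1")
      case True then show False using jmin[OF \<open>j-1 \<in> M\<close>] jB by simp
    next
      case False then have "j-1 = k" using jB by simp
      then show False using assms \<open>j-1 \<in> M\<close> by simp
    qed
  qed
  then have j1: "j+1 \<in> M" using twin_mem[OF jB(1)] by auto
  have btw: "\<forall>m. i < m \<and> m < j \<longrightarrow> m \<notin> M"
  proof (intro allI impI)
    fix m assume m: "i < m \<and> m < j"
    show "m \<notin> M"
    proof
      assume "m \<in> M"
      then show False using m imax jmin assms(3) by (metis linorder_neqE_nat not_le)
    qed
  qed
  have "gp M i j" unfolding gp_def using i2 iA jB j1 btw by auto
  then show ?thesis using iA jB by blast
qed

lemma corner_iff: assumes "2 \<le> c" "c \<le> n - 1" shows "c \<in> corners n zd \<longleftrightarrow> ee zd (c-1) \<noteq> 0"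
proof -
  have "ee zd (c-1) = zd (c-1) - 2 * zd c + zd (c+1)" using assms
    by (cases c) (auto simp: ee_def)
  then show ?thesis unfolding corners_def using assms by auto
qed

lemma one_corner_aux:
  assumes g: "gp M i j" and "i \<le> p" "p < q" "q \<le> j" "ee zd (p-1) \<noteq> 0" "ee zd (q-1) \<noteq> 0"
  shows False
proof -
  have b: "2 \<le> i" "j + 1 \<le> n" using gp_bounds[OF g] by auto
  have pc: "p \<in> corners n zd" using corner_iff[of p] assms b by auto
  have qc: "q \<in> corners n zd" using corner_iff[of q] assms b by auto
  define c2 where "c2 = (LEAST c. c \<in> corners n zd \<and> p < c)"
  have c2: "c2 \<in> corners n zd" "p < c2" using LeastI[of "\<lambda>c. c \<in> corners n zd \<and> p < c" q] qc assms
    unfolding c2_def by auto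
  have c2q: "c2 \<le> q" using Least_le[of "\<lambda>c. c \<in> corners n zd \<and> p < c" q] qc assms unfolding c2_def by auto
  have nb: "\<not> (p < c \<and> c < c2)" if "c \<in> corners n zd" for c
    using not_less_Least[of c "\<lambda>c. c \<in> corners n zd \<and> p < c"] that unfolding c2_def by auto
  have "linear_segment n zd {p..c2}"
    unfolding linear_segment_def
  proof (intro exI conjI)
    show "{p..c2} = {p..c2}" by simp
    show "p < c2" by fact
    show "p \<in> corners n zd \<union> {1, n}" using pc by simp
    show "c2 \<in> corners n zd \<union> {1, n}" using c2 by simp
    show "\<forall>c\<in>corners n zd \<union> {1, n}. \<not> (p < c \<and> c < c2)"
      using nb b assms c2q by auto
  qed
  then obtain t where t: "twin M t" "{t, t+1} \<subseteq> {p..c2}" using seg by blast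
  then have "t \<in> M" "t+1 \<in> M" "i \<le> t" "t + 1 \<le> j" using assms c2q unfolding twin_def by auto
  then show False using g unfolding gp_def by (metis Suc_eq_plus1 le_neq_implies_less less_add_one less_le_trans not_less_eq_eq)
qed

lemma one_corner:
  assumes g: "gp M i j" and "i \<le> p" "p \<le> j" "i \<le> q" "q \<le> j" "ee zd (p-1) \<noteq> 0" "ee zd (q-1) \<noteq> 0"
  shows "p = q"
  using one_corner_aux[OF g, of p q] one_corner_aux[OF g, of q p] assms
  by (metis linorder_neqE_nat)

lemma sig_step: assumes "1 \<le> t" "t+1 \<le> n" "t \<notin> M \<or> t+1 \<notin> M"
  shows "sig M zd (t-1) = sig M zd t"
proof -
  obtain i j where g: "gp M i j" "i \<le> t" "t+1 \<le> j"
  proof (cases "t \<notin> M")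
    case True
    then obtain i j where "gp M i j" "i < t" "t < j" using cover[of t] assms by auto
    then show ?thesis using that by auto
  next
    case False
    then have "t+1 \<notin> M" using assms by auto
    then obtain i j where "gp M i j" "i < t+1" "t+1 < j" using cover[of "t+1"] assms by auto
    then show ?thesis using that by auto
  qed
  have "sig M zd (t-1) = egap zd i j" using sig_gap[OF g(1)] g assms by auto
  moreover have "sig M zd t = egap zd i j" using sig_gap[OF g(1)] g assms by auto
  ultimately show ?thesis by simp
qed

end


lemma D_l1_ee: "D_l1 n z = (\<Sum>t=1..n-2. \<bar>ee z t\<bar>)"
  unfolding D_l1_def ee_def by simp

context recov begin

lemma lin_ident: assumes "meas_eq M z zd"
  shows "(\<Sum>t=1..n-2. sig M zd t * ee z t) = (\<Sum>t=1..n-2. sig M zd t * ee zd t)"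
proof -
  define w where "w m = z m - zd m" for m
  have w0: "w m = 0" if "m \<in> M" for m using assms that unfolding meas_eq_def w_def by simp
  have "(\<Sum>t=1..n-2. sig M zd t * ee w t) = sig M zd (n-2) * (w (n-2+2) - w (n-2+1))"
  proof (rule tele)
    show "w 2 = w 1" using w0 M1 M2 by simp
    show "\<forall>t. 1 \<le> t \<and> t \<le> n - 2 \<and> w (t + 1) \<noteq> w t \<longrightarrow> sig M zd (t - 1) = sig M zd t"
    proof (intro allI impI)
      fix t assume t: "1 \<le> t \<and> t \<le> n - 2 \<and> w (t + 1) \<noteq> w t"
      then have "t \<notin> M \<or> t+1 \<notin> M" using w0 by auto
      then show "sig M zd (t - 1) = sig M zd t" using sig_step[of t] t n3 by auto
    qed
  qed
  also have "\<dots> = 0"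
  proof -
    have "n-2+2 = n" "n-2+1 = n-1" using n3 by auto
    then show ?thesis using w0 Mn Mn1 by simp
  qed
  finally have "(\<Sum>t=1..n-2. sig M zd t * ee w t) = 0" .
  moreover have "(\<Sum>t=1..n-2. sig M zd t * ee w t) =
      (\<Sum>t=1..n-2. sig M zd t * ee z t) - (\<Sum>t=1..n-2. sig M zd t * ee zd t)"
    unfolding w_def ee_def by (simp add: sum_subtractf[symmetric] algebra_simps)
  ultimately show ?thesis by simp
qed

lemma sig_ee: assumes "1 \<le> t" "t \<le> n - 2" shows "sig M zd t * ee zd t = \<bar>ee zd t\<bar>"
proof (cases "\<exists>i j. gp M i j \<and> i \<le> t+1 \<and> t+1 \<le> j")
  case False
  then show ?thesis unfolding sig_def by (auto simp: sgn_if)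
next
  case True
  then obtain i j where g: "gp M i j" "i \<le> t+1" "t+1 \<le> j" by blast
  have sg: "sig M zd t = egap zd i j" using sig_gap[OF g] .
  have b: "2 \<le> i" "j + 1 \<le> n" using gp_bounds[OF g(1)] by auto
  show ?thesis
  proof (cases "ee zd t = 0")
    case True then show ?thesis by simp
  next
    case False
    define p where "p = t + 1"
    have ep: "ee zd (p-1) \<noteq> 0" using False unfolding p_def by simp
    define d where "d m = zd (m+1) - zd m" for m
    have z0: "ee zd (q-1) = 0" if "i \<le> q" "q \<le> j" "q \<noteq> p" for q
      using one_corner[OF g(1), of p q] ep that g unfolding p_def by auto
    have dq: "d (q-1) = d q" if "i \<le> q" "q \<le> j" "q \<noteq> p" for q
      using z0[OF that] ee_d[of q zd] that b unfolding d_def by simp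
    have 1: "d (i-1) = d (p-1)"
      by (rule slope_const) (use dq g b in \<open>auto simp: p_def\<close>)
    have 2: "d p = d j"
      by (rule slope_const) (use dq g b in \<open>auto simp: p_def\<close>)
    have "ee zd t = d p - d (p-1)" unfolding d_def p_def ee_def by simp
    also have "\<dots> = (zd (j+1) - zd j) - (zd i - zd (i-1))" using 1 2 b unfolding d_def by simp
    finally have "egap zd i j = sgn (ee zd t)" unfolding egap_def by simp
    then show ?thesis using sg by (auto simp: sgn_if)
  qed
qed

lemma lower: assumes "meas_eq M z zd" shows "D_l1 n zd \<le> D_l1 n z"
proof -
  have "(\<Sum>t=1..n-2. sig M zd t * ee z t) \<le> (\<Sum>t=1..n-2. \<bar>ee z t\<bar>)"
  proof (rule sum_mono)
    fix t
    have "\<bar>sig M zd t * ee z t\<bar> \<le> \<bar>ee z t\<bar>" using sig_abs[of M zd t]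
      by (simp add: abs_mult mult_left_le_one_le)
    then show "sig M zd t * ee z t \<le> \<bar>ee z t\<bar>" by simp
  qed
  moreover have "(\<Sum>t=1..n-2. sig M zd t * ee zd t) = (\<Sum>t=1..n-2. \<bar>ee zd t\<bar>)"
    using sig_ee by (intro sum.cong) auto
  ultimately show ?thesis using lin_ident[OF assms] unfolding D_l1_ee by simp
qed

lemma tight: assumes "meas_eq M z zd" "D_l1 n z \<le> D_l1 n zd" "1 \<le> t" "t \<le> n - 2"
  shows "\<bar>ee z t\<bar> = sig M zd t * ee z t"
proof -
  have nn: "\<forall>t\<in>{1..n-2}. 0 \<le> \<bar>ee z t\<bar> - sig M zd t * ee z t"
  proof
    fix t
    have "\<bar>sig M zd t * ee z t\<bar> \<le> \<bar>ee z t\<bar>" using sig_abs[of M zd t]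
      by (simp add: abs_mult mult_left_le_one_le)
    then show "0 \<le> \<bar>ee z t\<bar> - sig M zd t * ee z t" by simp
  qed
  have s1: "(\<Sum>t=1..n-2. sig M zd t * ee zd t) = (\<Sum>t=1..n-2. \<bar>ee zd t\<bar>)"
    using sig_ee by (intro sum.cong) auto
  have "(\<Sum>t=1..n-2. \<bar>ee z t\<bar> - sig M zd t * ee z t) = D_l1 n z - D_l1 n zd"
    using lin_ident[OF assms(1)] s1 unfolding D_l1_ee by (simp add: sum_subtractf)
  also have "\<dots> \<le> 0" using assms by simp
  moreover have "0 \<le> (\<Sum>t=1..n-2. \<bar>ee z t\<bar> - sig M zd t * ee z t)"
    by (rule sum_nonneg) (use nn in auto)
  ultimately have "(\<Sum>t=1..n-2. \<bar>ee z t\<bar> - sig M zd t * ee z t) = 0"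
    by linarith
  then have "\<forall>t\<in>{1..n-2}. \<bar>ee z t\<bar> - sig M zd t * ee z t = 0"
    using sum_nonneg_eq_0_iff[of "{1..n-2}" "\<lambda>t. \<bar>ee z t\<bar> - sig M zd t * ee z t"] nn by simp
  then show ?thesis using assms(3,4) by simp
qed

end


context recov begin

lemma gap_cmp:
  assumes z: "meas_eq M z zd" "D_l1 n z \<le> D_l1 n zd" and g: "gp M i j" and k: "i < k" "k < j"
  shows "egap zd i j * (z k - zd k) \<ge> 0 \<and> (egap zd i j = 0 \<longrightarrow> z k = zd k)"
proof -
  define \<epsilon> where "\<epsilon> = egap zd i j"
  have b: "2 \<le> i" "j + 1 \<le> n" using gp_bounds[OF g] by auto
  have sq: "sig M zd (q-1) = \<epsilon>" if "i \<le> q" "q \<le> j" for q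
    using sig_gap[OF g, of "q-1" zd] that b unfolding \<epsilon>_def by auto
  have tz: "\<bar>ee z (q-1)\<bar> = \<epsilon> * ee z (q-1)" if "i \<le> q" "q \<le> j" for q
    using tight[OF z, of "q-1"] sq[OF that] that b by auto
  have tzd: "\<bar>ee zd (q-1)\<bar> = \<epsilon> * ee zd (q-1)" if "i \<le> q" "q \<le> j" for q
    using sig_ee[of "q-1"] sq[OF that] that b by auto
  have gM: "i - 1 \<in> M" "i \<in> M" "j \<in> M" "j + 1 \<in> M" using g unfolding gp_def by auto
  then have eqs: "z (i-1) = zd (i-1)" "z i = zd i" "z j = zd j" "z (j+1) = zd (j+1)"
    using z(1) unfolding meas_eq_def by auto
  have eps: "\<epsilon> = 0 \<or> \<epsilon> = 1 \<or> \<epsilon> = -1" unfolding \<epsilon>_def egap_def by (auto simp: sgn_if)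
  have zdcase: "(\<forall>q. i \<le> q \<and> q < k \<longrightarrow> ee zd (q-1) = 0) \<or> (\<forall>q. k < q \<and> q \<le> j \<longrightarrow> ee zd (q-1) = 0)"
  proof (rule ccontr)
    assume "\<not> ?thesis"
    then obtain p q where "i \<le> p" "p < k" "ee zd (p-1) \<noteq> 0" "k < q" "q \<le> j" "ee zd (q-1) \<noteq> 0" by auto
    then show False using one_corner[OF g, of p q] k by auto
  qed
  have lf: "zd k = zd i + (zd i - zd (i-1)) * real (k - i)" if "\<forall>q. i \<le> q \<and> q < k \<longrightarrow> ee zd (q-1) = 0"
    using lin_fwd[OF that] b k by auto
  have lb: "zd k = zd j - (zd (j+1) - zd j) * real (j - k)" if "\<forall>q. k < q \<and> q \<le> j \<longrightarrow> ee zd (q-1) = 0"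
    using lin_bwd[OF that] k by auto
  show ?thesis
  proof (cases "\<epsilon> = 0")
    case True
    then have e1: "\<forall>q. i \<le> q \<and> q < k \<longrightarrow> ee z (q-1) = 0" using tz k by auto
    have e2: "\<forall>q. i \<le> q \<and> q < k \<longrightarrow> ee zd (q-1) = 0" using tzd True k by auto
    have "z k = z i + (z i - z (i-1)) * real (k - i)" using lin_fwd[OF e1] b k by auto
    then have "z k = zd k" using lf[OF e2] eqs by simp
    then show ?thesis unfolding \<epsilon>_def by simp
  next
    case False
    then have "\<epsilon> = 1 \<or> \<epsilon> = -1" using eps by simp
    then show ?thesis
    proof
      assume e: "\<epsilon> = 1"
      have "\<forall>q. i \<le> q \<and> q \<le> j \<longrightarrow> ee z (q-1) \<ge> 0" using tz e by (metis abs_ge_zero mult_1)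
      from conv_lb[OF this, of k] b k
      have "z k \<ge> z i + (z i - z (i-1)) * real (k - i) \<and> z k \<ge> z j - (z (j+1) - z j) * real (j - k)" by auto
      then have "z k \<ge> zd k" using zdcase lf lb eqs by auto
      then show ?thesis using e unfolding \<epsilon>_def by simp
    next
      assume e: "\<epsilon> = -1"
      have "\<forall>q. i \<le> q \<and> q \<le> j \<longrightarrow> ee (\<lambda>m. - z m) (q-1) \<ge> 0"
      proof (intro allI impI)
        fix q assume "i \<le> q \<and> q \<le> j"
        then have "\<bar>ee z (q-1)\<bar> = - ee z (q-1)" using tz e by simp
        then show "ee (\<lambda>m. - z m) (q-1) \<ge> 0" unfolding ee_def by (simp add: abs_if split: if_splits)
      qed
      from conv_lb[OF this, of k] b k
      have "z k \<le> z i + (z i - z (i-1)) * real (k - i) \<and> z k \<le> z j - (z (j+1) - z j) * real (j - k)"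
        by (auto simp: algebra_simps)
      then have "z k \<le> zd k" using zdcase lf lb eqs by auto
      then show ?thesis using e unfolding \<epsilon>_def by simp
    qed
  qed
qed

lemma sv: assumes zs: "meas_eq M zs zd" and g: "gp M i j" and k: "i < k" "k < j"
  shows "sign_vec M zs k = egap zd i j"
proof -
  let ?P = "\<lambda>x. case x of (i, j) \<Rightarrow> gap_pair M k i j"
  have ex: "\<exists>i j. gap_pair M k i j" using g k gap_pair_gp by blast
  have "?P (i,j)" using g k gap_pair_gp by simp
  then have P: "?P (SOME x. ?P x)" by (rule someI)
  obtain a b where ab: "(SOME x. ?P x) = (a, b)" by (cases "SOME x. ?P x") auto
  then have "gp M a b" "a < k" "k < b" using P gap_pair_gp by auto
  then have "a = i \<and> b = j" using gp_unique[OF g, of a b k] k by auto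
  then have "sign_vec M zs k = sgn ((zs (j+1) - zs j) - (zs i - zs (i-1)))"
    unfolding sign_vec_def using ex ab by simp
  moreover have "i - 1 \<in> M" "i \<in> M" "j \<in> M" "j + 1 \<in> M" using g unfolding gp_def by auto
  ultimately show ?thesis using zs unfolding meas_eq_def egap_def by simp
qed

lemma main2:
  assumes z: "meas_eq M z zd" "D_l1 n z \<le> D_l1 n zd" and zs: "meas_eq M zs zd"
    and ex: "\<exists>k\<in>{1..n}. z k \<noteq> zd k"
  shows "inner_n n (sign_vec M zs) zd < inner_n n (sign_vec M zs) z"
proof -
  have le: "sign_vec M zs k * zd k \<le> sign_vec M zs k * z k \<and>
      (z k \<noteq> zd k \<longrightarrow> sign_vec M zs k * zd k < sign_vec M zs k * z k)" if kn: "k \<in> {1..n}" for k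
  proof (cases "k \<in> M")
    case True then show ?thesis using z(1) unfolding meas_eq_def by simp
  next
    case False
    then obtain i j where g: "gp M i j" "i < k" "k < j" using cover[of k] kn False by auto
    have "sign_vec M zs k = egap zd i j" using sv[OF zs g] .
    moreover have "egap zd i j * (z k - zd k) \<ge> 0 \<and> (egap zd i j = 0 \<longrightarrow> z k = zd k)"
      using gap_cmp[OF z g] .
    ultimately show ?thesis by (auto simp: algebra_simps le_less)
  qed
  show ?thesis unfolding inner_n_def
  proof (rule sum_strict_mono_ex1)
    show "finite {1..n}" by simp
    show "\<forall>x\<in>{1..n}. sign_vec M zs x * zd x \<le> sign_vec M zs x * z x" using le by blast
    obtain k where "k \<in> {1..n}" "z k \<noteq> zd k" using ex by blast
    then show "\<exists>a\<in>{1..n}. sign_vec M zs a * zd a < sign_vec M zs a * z a" using le by blast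
  qed
qed

end

theorem corollary3:
  fixes n :: nat and zd zs :: "nat \<Rightarrow> real" and M :: "nat set"
  assumes "n \<ge> 3"
    and "M \<subseteq> {1..n}"
    and "union_of_twins M"
    and "1 \<in> M" and "n \<in> M"
    and "\<forall>S. linear_segment n zd S \<longrightarrow> (\<exists>i. twin M i \<and> {i, i+1} \<subseteq> S)"
    and zs_feas: "meas_eq M zs zd"
    and zs_opt: "\<forall>z. meas_eq M z zd \<longrightarrow> D_l1 n zs \<le> D_l1 n z"
  shows "meas_eq M zd zd \<and> D_l1 n zd \<le> D_l1 n zs \<and>
    (\<forall>z. meas_eq M z zd \<and> D_l1 n z \<le> D_l1 n zs \<and> (\<exists>k\<in>{1..n}. z k \<noteq> zd k) \<longrightarrow>
       inner_n n (sign_vec M zs) zd < inner_n n (sign_vec M zs) z)"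
proof -
  interpret recov n M zd using assms(1-6) by unfold_locales
  have f: "meas_eq M zd zd" unfolding meas_eq_def by simp
  have o: "D_l1 n zd \<le> D_l1 n zs" using lower[OF zs_feas] .
  have o2: "D_l1 n zs \<le> D_l1 n zd" using zs_opt f by simp
  show ?thesis
  proof (intro conjI allI impI)
    show "meas_eq M zd zd" by fact
    show "D_l1 n zd \<le> D_l1 n zs" by fact
    fix z assume h: "meas_eq M z zd \<and> D_l1 n z \<le> D_l1 n zs \<and> (\<exists>k\<in>{1..n}. z k \<noteq> zd k)"
    then show "inner_n n (sign_vec M zs) zd < inner_n n (sign_vec M zs) z"
      using main2[of z zs] o2 zs_feas by auto
  qed
qed

end
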